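(* Let $\mathcal A$ be a mixed online algorithm for an online problem $(\mathcal X,\mathcal R,d)$ with start state $s^0$ and cost function $\mathrm{cost}$. Then there is a behavioral online algorithm $\mathcal A'$ for the same problem such that for every finite request sequence $\varrho=r^1\dots r^n$, $$E\big(\mathrm{cost}_{\mathcal A'}(\varrho)\big)=E\big(\mathrm{cost}_{\mathcal A}(\varrho)\big).$$
   Context: Online problem: a set $\mathcal X$ of states (configurations), a set $\mathcal R$ of requests, a start state $s^0\in\mathcal X$, a function $d:\mathcal X\times\mathcal X\to[0,\infty)$ with $d(x,x)=0$ and $d(x,z)\le d(x,y)+d(y,z)$, and a cost function $\mathrm{cost}:\mathcal X\times\mathcal R\times\mathcal X\to[0,\infty)$ ($\mathrm{cost}(x,r,y)$ is the cost of serving request $r$ while moving from $x$ to $y$) satisfying $\mathrm{cost}(u,r,v)\le d(u,x)+\mathrm{cost}(x,r,y)+d(y,v)$ for all $u,x,y,v\in\mathcal X$, $r\in\mathcal R$. $\Pi$ denotes the set of finitely supported probability distributions on $\mathcal X$; a point mass at $x$ is identified with $x$. For $\pi,\pi'\in\Pi$ and $r\in\mathcal R$, $\mathrm{cost}(\pi,r,\pi')$ is the minimum transportation cost: the minimum of $\sum_{x,y}\gamma(x,y)\,\mathrm{cost}(x,r,y)$ over all probability distributions $\gamma$ on $\mathrm{supp}(\pi)\times\mathrm{supp}(\pi')$ whose first marginal is $\pi$ and second marginal is $\pi'$. Mixed online algorithm $\mathcal A$: a set $\mathcal M$ of memory states, a start memory state $m^0$, and for each full state $k=(\pi,m)\in\Pi\times\mathcal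 M$ (reachable by $\mathcal A$) and each request $r$, a finite list of "subsequent" full states $k_i=(\pi_i,m_i)$, $i=1,\dots,p$, with weights $\lambda_i>0$, $\sum_i\lambda_i=1$. Starting from $k^0=(s^0,m^0)$, on request $r^t$ the algorithm moves from $k^{t-1}$ to $k^t=k_i$ (the subsequents for $(k^{t-1},r^t)$) with probability $\lambda_i$. The cost of such a step is $\mathrm{cost}_{\mathcal A}(k,r)=\mathrm{cost}(\pi,r,\bar\pi)$ where $\bar\pi=\sum_i\lambda_i\pi_i$, and $\mathrm{cost}_{\mathcal A}(\varrho)=\sum_{t=1}^n\mathrm{cost}_{\mathcal A}(k^{t-1},r^t)$ (a random variable). Behavioral online algorithm: a set $\mathcal M$ of memory states, a start memory state $m^0$, and for each $(x,m)\in\mathcal X\times\mathcal M$ and $r\in\mathcal R$ a finitely supported probability distribution on $\mathcal X\times\mathcal M$. Starting from $(x^0,m^0)=(s^0,m^0)$, on request $r^t$ it draws $(x^t,m^t)$ from the distribution associated with $(x^{t-1},m^{t-1},r^t)$. Its cost on $\varrho$ is the random variable $\sum_{t=1}^n\mathrm{cost}(x^{t-1},r^t,x^t)$. *)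

theory Defs
  imports "HOL-Probability.Probability"
begin

text \<open>Finitely supported probability distributions on states are modelled as
  pmfs with finite support.  A full state of a mixed algorithm is a pair
  (distribution on states, memory state).\<close>

type_synonym ('x, 'm) full_state = "'x pmf \<times> 'm"

definition couplings :: "'x pmf \<Rightarrow> 'x pmf \<Rightarrow> ('x \<times> 'x) pmf set" where
  "couplings \<pi> \<pi>' = {\<gamma>. map_pmf fst \<gamma> = \<pi> \<and> map_pmf snd \<gamma> = \<pi>'}"

definition transport_cost ::
  "('x \<Rightarrow> 'r \<Rightarrow> 'x \<Rightarrow> real) \<Rightarrow> 'x pmf \<Rightarrow> 'r \<Rightarrow> 'x pmf \<Rightarrow> real" where
  "transport_cost cost \<pi> r \<pi>' =
     Inf ((\<lambda>\<gamma>. \<Sum>(x,y)\<in>set_pmf \<pi> \<times> set_pmf \<pi>'. pmf \<gamma> (x,y) * cost x r y)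
          ` couplings \<pi> \<pi>')"

text \<open>Full states reachable by a mixed algorithm A (A k r is the distribution
  over subsequent full states, i.e. the list of k_i with weights lambda_i).\<close>

inductive_set reachable_mixed ::
  "(('x, 'm) full_state \<Rightarrow> 'r \<Rightarrow> ('x, 'm) full_state pmf) \<Rightarrow> 'x \<Rightarrow> 'm
     \<Rightarrow> ('x, 'm) full_state set"
  for A s0 m0 where
  start: "(return_pmf s0, m0) \<in> reachable_mixed A s0 m0"
| step: "k \<in> reachable_mixed A s0 m0 \<Longrightarrow> k' \<in> set_pmf (A k r)
           \<Longrightarrow> k' \<in> reachable_mixed A s0 m0"

definition mixed_alg ::
  "(('x, 'm) full_state \<Rightarrow> 'r \<Rightarrow> ('x, 'm) full_state pmf) \<Rightarrow> 'x \<Rightarrow> 'm \<Rightarrow> bool" where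
  "mixed_alg A s0 m0 \<longleftrightarrow>
     (\<forall>k\<in>reachable_mixed A s0 m0. \<forall>r.
        finite (set_pmf (A k r)) \<and> (\<forall>k'\<in>set_pmf (A k r). finite (set_pmf (fst k'))))"

definition mixed_step_cost ::
  "('x \<Rightarrow> 'r \<Rightarrow> 'x \<Rightarrow> real) \<Rightarrow> (('x, 'm) full_state \<Rightarrow> 'r \<Rightarrow> ('x, 'm) full_state pmf)
     \<Rightarrow> ('x, 'm) full_state \<Rightarrow> 'r \<Rightarrow> real" where
  "mixed_step_cost cost A k r = transport_cost cost (fst k) r (bind_pmf (A k r) fst)"

primrec mixed_cost_dist ::
  "('x \<Rightarrow> 'r \<Rightarrow> 'x \<Rightarrow> real) \<Rightarrow> (('x, 'm) full_state \<Rightarrow> 'r \<Rightarrow> ('x, 'm) full_state pmf)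
     \<Rightarrow> ('x, 'm) full_state \<Rightarrow> 'r list \<Rightarrow> real pmf" where
  "mixed_cost_dist cost A k [] = return_pmf 0"
| "mixed_cost_dist cost A k (r # rs) =
     bind_pmf (A k r) (\<lambda>k'. map_pmf (\<lambda>c. mixed_step_cost cost A k r + c)
                                   (mixed_cost_dist cost A k' rs))"

primrec behav_cost_dist ::
  "('x \<Rightarrow> 'r \<Rightarrow> 'x \<Rightarrow> real) \<Rightarrow> ('x \<Rightarrow> 'mm \<Rightarrow> 'r \<Rightarrow> ('x \<times> 'mm) pmf)
     \<Rightarrow> 'x \<Rightarrow> 'mm \<Rightarrow> 'r list \<Rightarrow> real pmf" where
  "behav_cost_dist cost B x m [] = return_pmf 0"
| "behav_cost_dist cost B x m (r # rs) =
     bind_pmf (B x m r) (\<lambda>(y, m'). map_pmf (\<lambda>c. cost x r y + c)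
                                        (behav_cost_dist cost B y m' rs))"

definition behavioral_alg :: "('x \<Rightarrow> 'mm \<Rightarrow> 'r \<Rightarrow> ('x \<times> 'mm) pmf) \<Rightarrow> bool" where
  "behavioral_alg B \<longleftrightarrow> (\<forall>x m r. finite (set_pmf (B x m r)))"

definition online_problem ::
  "('x \<Rightarrow> 'x \<Rightarrow> real) \<Rightarrow> ('x \<Rightarrow> 'r \<Rightarrow> 'x \<Rightarrow> real) \<Rightarrow> bool" where
  "online_problem d cost \<longleftrightarrow>
     (\<forall>x y. d x y \<ge> 0) \<and> (\<forall>x. d x x = 0) \<and> (\<forall>x y z. d x z \<le> d x y + d y z) \<and>
     (\<forall>x r y. cost x r y \<ge> 0) \<and>
     (\<forall>u x y v r. cost u r v \<le> d u x + cost x r y + d y v)"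

end

theory Submission
  imports Defs
begin


lemma marg_fst:
  assumes fin: "finite Sb" and sub: "set_pmf g \<subseteq> Sa \<times> Sb"
  shows "pmf (map_pmf fst g) x = (\<Sum>y\<in>Sb. pmf g (x,y))"
proof -
  have "pmf (map_pmf fst g) x = measure g (fst -` {x})" by (rule pmf_map)
  also have "\<dots> = measure g (fst -` {x} \<inter> set_pmf g)" by (simp add: measure_Int_set_pmf)
  also have "fst -` {x} \<inter> set_pmf g = ({x} \<times> Sb) \<inter> set_pmf g" using sub by auto
  also have "measure g \<dots> = measure g ({x} \<times> Sb)" by (simp add: measure_Int_set_pmf)
  also have "\<dots> = sum (pmf g) ({x} \<times> Sb)" using fin by (simp add: measure_measure_pmf_finite)
  also have "{x} \<times> Sb = Pair x ` Sb" by auto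
  also have "sum (pmf g) (Pair x ` Sb) = (\<Sum>y\<in>Sb. pmf g (x,y))"
    by (subst sum.reindex) (auto intro: inj_onI)
  finally show ?thesis .
qed

lemma marg_snd:
  assumes fin: "finite Sa" and sub: "set_pmf g \<subseteq> Sa \<times> Sb"
  shows "pmf (map_pmf snd g) y = (\<Sum>x\<in>Sa. pmf g (x,y))"
proof -
  have "pmf (map_pmf snd g) y = measure g (snd -` {y})" by (rule pmf_map)
  also have "\<dots> = measure g (snd -` {y} \<inter> set_pmf g)" by (simp add: measure_Int_set_pmf)
  also have "snd -` {y} \<inter> set_pmf g = (Sa \<times> {y}) \<inter> set_pmf g" using sub by auto
  also have "measure g \<dots> = measure g (Sa \<times> {y})" by (simp add: measure_Int_set_pmf)
  also have "\<dots> = sum (pmf g) (Sa \<times> {y})" using fin by (simp add: measure_measure_pmf_finite)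
  also have "Sa \<times> {y} = (\<lambda>x. (x,y)) ` Sa" by auto
  also have "sum (pmf g) ((\<lambda>x. (x,y)) ` Sa) = (\<Sum>x\<in>Sa. pmf g (x,y))"
    by (subst sum.reindex) (auto intro: inj_onI)
  finally show ?thesis .
qed

lemma coupling_sub:
  assumes "g \<in> couplings p q" shows "set_pmf g \<subseteq> set_pmf p \<times> set_pmf q"
proof
  fix z assume z: "z \<in> set_pmf g"
  have e: "map_pmf fst g = p" "map_pmf snd g = q" using assms unfolding couplings_def by auto
  have "fst z \<in> fst ` set_pmf g" "snd z \<in> snd ` set_pmf g" using z by (blast intro: imageI)+
  then have "fst z \<in> set_pmf p" "snd z \<in> set_pmf q" unfolding e[symmetric] set_map_pmf .
  then show "z \<in> set_pmf p \<times> set_pmf q" by (cases z) auto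
qed

lemma compact_box: "compact {f :: 'a \<Rightarrow> real. \<forall>p. f p \<in> {0..1}}"
proof -
  have "compactin (product_topology (\<lambda>_. euclidean) UNIV) (PiE UNIV (\<lambda>_::'a. {0..1::real}))"
    by (subst compactin_PiE) auto
  moreover have "PiE UNIV (\<lambda>_::'a. {0..1::real}) = {f. \<forall>p. f p \<in> {0..1}}" by auto
  ultimately show ?thesis by (simp add: euclidean_product_topology)
qed

definition tobj :: "('x \<Rightarrow> 'x \<Rightarrow> real) \<Rightarrow> 'x set \<Rightarrow> 'x set \<Rightarrow> ('x \<times> 'x \<Rightarrow> real) \<Rightarrow> real" where
  "tobj c Sa Sb f = (\<Sum>(x,y)\<in>Sa \<times> Sb. f (x,y) * c x y)"

lemma opt_coupling:
  fixes p q :: "'x pmf" and c :: "'x \<Rightarrow> 'x \<Rightarrow> real"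
  assumes fa: "finite (set_pmf p)" and fb: "finite (set_pmf q)"
  shows "\<exists>g\<in>couplings p q. \<forall>g'\<in>couplings p q.
           tobj c (set_pmf p) (set_pmf q) (pmf g) \<le> tobj c (set_pmf p) (set_pmf q) (pmf g')"
proof -
  define Sa where "Sa = set_pmf p"
  define Sb where "Sb = set_pmf q"
  define S where "S = Sa \<times> Sb"
  have fS: "finite S" using fa fb by (simp add: S_def Sa_def Sb_def)
  define F where "F = {f :: 'x \<times> 'x \<Rightarrow> real. \<forall>p. f p \<in> {0..1}} \<inter> (\<Inter>z\<in>-S. {f. f z = 0})
     \<inter> (\<Inter>x. {f. (\<Sum>y\<in>Sb. f (x,y)) = pmf p x}) \<inter> (\<Inter>y. {f. (\<Sum>x\<in>Sa. f (x,y)) = pmf q y})"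
  have cl: "closed ((\<Inter>z\<in>-S. {f :: 'x \<times> 'x \<Rightarrow> real. f z = 0})
     \<inter> (\<Inter>x. {f. (\<Sum>y\<in>Sb. f (x,y)) = pmf p x}) \<inter> (\<Inter>y. {f. (\<Sum>x\<in>Sa. f (x,y)) = pmf q y}))"
    by (intro closed_Int closed_INT ballI closed_Collect_eq continuous_on_sum continuous_on_const
          continuous_on_product_coordinates)
  have cF: "compact F" unfolding F_def Int_assoc
    by (rule compact_Int_closed[OF compact_box]) (use cl in \<open>simp add: Int_assoc\<close>)
  have inF: "pmf g \<in> F" if g: "g \<in> couplings p q" for g
  proof -
    have sub: "set_pmf g \<subseteq> Sa \<times> Sb" using coupling_sub[OF g] by (simp add: Sa_def Sb_def)
    have e: "map_pmf fst g = p" "map_pmf snd g = q" using g unfolding couplings_def by auto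
    show ?thesis unfolding F_def
      using marg_fst[OF fb[folded Sb_def] sub] marg_snd[OF fa[folded Sa_def] sub] sub
      by (auto simp: e pmf_le_1 S_def set_pmf_iff)
  qed
  have ne: "F \<noteq> {}"
  proof -
    have "pair_pmf p q \<in> couplings p q" by (simp add: couplings_def map_fst_pair_pmf map_snd_pair_pmf)
    then show ?thesis using inF by blast
  qed
  have cont: "continuous_on F (tobj c Sa Sb)" unfolding tobj_def case_prod_beta
    by (intro continuous_on_sum continuous_on_mult continuous_on_const
          continuous_on_product_coordinates[THEN continuous_on_subset]) auto
  obtain f where fF: "f \<in> F" and fmin: "\<And>h. h \<in> F \<Longrightarrow> tobj c Sa Sb f \<le> tobj c Sa Sb h"
    using continuous_attains_inf[OF cF ne cont] by blast
  have f01: "\<And>z. 0 \<le> f z" and f0: "\<And>z. z \<notin> S \<Longrightarrow> f z = 0"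
    and fm1: "\<And>x. (\<Sum>y\<in>Sb. f (x,y)) = pmf p x" and fm2: "\<And>y. (\<Sum>x\<in>Sa. f (x,y)) = pmf q y"
    using fF unfolding F_def by auto
  have "(\<Sum>z\<in>S. f z) = (\<Sum>x\<in>Sa. \<Sum>y\<in>Sb. f (x,y))"
    unfolding S_def by (simp add: sum.cartesian_product)
  also have "\<dots> = 1" using fm1 sum_pmf_eq_1[of Sa p] fa by (simp add: Sa_def)
  finally have s1: "(\<Sum>z\<in>S. f z) = 1" .
  have prob: "(\<integral>\<^sup>+z. ennreal (f z) \<partial>count_space UNIV) = 1"
    using fS f0 f01 s1 by (subst nn_integral_count_space'[of S]) auto
  define g where "g = embed_pmf f"
  have pg: "pmf g = f" unfolding g_def using pmf_embed_pmf[of f, OF f01 prob] by auto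
  have subg: "set_pmf g \<subseteq> Sa \<times> Sb"
  proof
    fix z assume "z \<in> set_pmf g"
    then have "f z \<noteq> 0" by (simp add: set_pmf_iff pg)
    then show "z \<in> Sa \<times> Sb" using f0 unfolding S_def by blast
  qed
  have "g \<in> couplings p q" unfolding couplings_def
    using marg_fst[OF fb[folded Sb_def] subg] marg_snd[OF fa[folded Sa_def] subg]
    by (auto intro!: pmf_eqI simp: pg fm1 fm2)
  moreover have "\<forall>g'\<in>couplings p q. tobj c Sa Sb (pmf g) \<le> tobj c Sa Sb (pmf g')"
    using fmin inF pg by auto
  ultimately show ?thesis unfolding Sa_def Sb_def by blast
qed

lemma opt_coupling_tc:
  fixes p q :: "'x pmf"
  assumes fa: "finite (set_pmf p)" and fb: "finite (set_pmf q)"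
  shows "\<exists>g\<in>couplings p q. (\<Sum>(x,y)\<in>set_pmf p \<times> set_pmf q. pmf g (x,y) * cost x r y)
            = transport_cost cost p r q"
proof -
  obtain g where g: "g \<in> couplings p q" and m: "\<forall>g'\<in>couplings p q.
           tobj (\<lambda>x y. cost x r y) (set_pmf p) (set_pmf q) (pmf g) \<le> tobj (\<lambda>x y. cost x r y) (set_pmf p) (set_pmf q) (pmf g')"
    using opt_coupling[OF fa fb] by blast
  show ?thesis unfolding transport_cost_def
    by (rule bexI[OF _ g], rule sym, rule cInf_eq_minimum) (use g m in \<open>auto simp: tobj_def\<close>)
qed



definition goodk :: "(('x, 'm) full_state \<Rightarrow> 'r \<Rightarrow> ('x, 'm) full_state pmf) \<Rightarrow> ('x, 'm) full_state \<Rightarrow> 'r \<Rightarrow> bool" where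
  "goodk A k r \<longleftrightarrow> finite (set_pmf (fst k)) \<and> finite (set_pmf (A k r)) \<and> (\<forall>k'\<in>set_pmf (A k r). finite (set_pmf (fst k')))"

definition pbar :: "(('x, 'm) full_state \<Rightarrow> 'r \<Rightarrow> ('x, 'm) full_state pmf) \<Rightarrow> ('x, 'm) full_state \<Rightarrow> 'r \<Rightarrow> 'x pmf" where
  "pbar A k r = bind_pmf (A k r) fst"

definition gam :: "('x \<Rightarrow> 'r \<Rightarrow> 'x \<Rightarrow> real) \<Rightarrow> (('x, 'm) full_state \<Rightarrow> 'r \<Rightarrow> ('x, 'm) full_state pmf) \<Rightarrow> ('x, 'm) full_state \<Rightarrow> 'r \<Rightarrow> ('x \<times> 'x) pmf" where
  "gam cost A k r = (SOME g. g \<in> couplings (fst k) (pbar A k r) \<and>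
      (\<Sum>(x,y)\<in>set_pmf (fst k) \<times> set_pmf (pbar A k r). pmf g (x,y) * cost x r y) = transport_cost cost (fst k) r (pbar A k r))"

definition wB :: "('x \<Rightarrow> 'r \<Rightarrow> 'x \<Rightarrow> real) \<Rightarrow> (('x, 'm) full_state \<Rightarrow> 'r \<Rightarrow> ('x, 'm) full_state pmf) \<Rightarrow> 'x \<Rightarrow> ('x, 'm) full_state \<Rightarrow> 'r \<Rightarrow> 'x \<times> ('x, 'm) full_state \<Rightarrow> real" where
  "wB cost A x k r = (\<lambda>(y,k'). pmf (gam cost A k r) (x,y) / pmf (fst k) x * pmf (A k r) k' * pmf (fst k') y / pmf (pbar A k r) y)"

definition Bc :: "('x \<Rightarrow> 'r \<Rightarrow> 'x \<Rightarrow> real) \<Rightarrow> (('x, 'm) full_state \<Rightarrow> 'r \<Rightarrow> ('x, 'm) full_state pmf) \<Rightarrow> 'x \<Rightarrow> ('x, 'm) full_state \<Rightarrow> 'r \<Rightarrow> ('x \<times> ('x, 'm) full_state) pmf" where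
  "Bc cost A x k r = (if goodk A k r \<and> x \<in> set_pmf (fst k) then embed_pmf (wB cost A x k r) else return_pmf (x,k))"

context
  fixes cost :: "'x \<Rightarrow> 'r \<Rightarrow> 'x \<Rightarrow> real" and A :: "('x, 'm) full_state \<Rightarrow> 'r \<Rightarrow> ('x, 'm) full_state pmf"
    and k :: "('x, 'm) full_state" and r :: 'r
  assumes good: "goodk A k r"
begin

lemma fpi: "finite (set_pmf (fst k))" and fP: "finite (set_pmf (A k r))"
  and fk': "k' \<in> set_pmf (A k r) \<Longrightarrow> finite (set_pmf (fst k'))"
  using good by (auto simp: goodk_def)

lemma set_pbar: "set_pmf (pbar A k r) = (\<Union>k'\<in>set_pmf (A k r). set_pmf (fst k'))"
  by (simp add: pbar_def set_bind_pmf)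

lemma fpb: "finite (set_pmf (pbar A k r))"
  using fP fk' by (simp add: set_pbar)

lemma pmf_pbar: "pmf (pbar A k r) y = (\<Sum>k'\<in>set_pmf (A k r). pmf (A k r) k' * pmf (fst k') y)"
  unfolding pbar_def pmf_bind by (subst integral_measure_pmf[OF fP]) (auto simp: set_pmf_iff)

lemma gam_prop: "gam cost A k r \<in> couplings (fst k) (pbar A k r) \<and>
      (\<Sum>(x,y)\<in>set_pmf (fst k) \<times> set_pmf (pbar A k r). pmf (gam cost A k r) (x,y) * cost x r y) = transport_cost cost (fst k) r (pbar A k r)"
  unfolding gam_def using opt_coupling_tc[OF fpi fpb, of cost r] unfolding Bex_def by (rule someI_ex)

lemma gam_sub: "set_pmf (gam cost A k r) \<subseteq> set_pmf (fst k) \<times> set_pmf (pbar A k r)"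
  using coupling_sub gam_prop by blast

lemma gam_m1: "(\<Sum>y\<in>set_pmf (pbar A k r). pmf (gam cost A k r) (x,y)) = pmf (fst k) x"
  using marg_fst[OF fpb gam_sub, of x] gam_prop unfolding couplings_def by auto

lemma gam_m2: "(\<Sum>x\<in>set_pmf (fst k). pmf (gam cost A k r) (x,y)) = pmf (pbar A k r) y"
  using marg_snd[OF fpi gam_sub, of y] gam_prop unfolding couplings_def by auto

lemma gam_zero: "pmf (pbar A k r) y = 0 \<Longrightarrow> pmf (gam cost A k r) (x,y) = 0"
  using gam_sub by (auto simp: set_pmf_iff)

lemma term_zero: "pmf (pbar A k r) y = 0 \<Longrightarrow> pmf (A k r) k' * pmf (fst k') y = 0"
proof -
  assume z: "pmf (pbar A k r) y = 0"
  show ?thesis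
  proof (cases "k' \<in> set_pmf (A k r)")
    case True
    have "(\<Sum>k'\<in>set_pmf (A k r). pmf (A k r) k' * pmf (fst k') y) = 0" using z pmf_pbar by simp
    then show ?thesis using True fP by (subst (asm) sum_nonneg_eq_0_iff) auto
  next
    case False then show ?thesis by (simp add: set_pmf_iff)
  qed
qed

lemma wB_nonneg: "0 \<le> wB cost A x k r z"
  unfolding wB_def by (auto simp: case_prod_beta)

lemma wB_sum1: "x \<in> set_pmf (fst k) \<Longrightarrow>
   (\<Sum>k'\<in>set_pmf (A k r). wB cost A x k r (y,k')) = pmf (gam cost A k r) (x,y) / pmf (fst k) x"
proof -
  have "(\<Sum>k'\<in>set_pmf (A k r). wB cost A x k r (y,k')) =
     pmf (gam cost A k r) (x,y) / pmf (fst k) x * (\<Sum>k'\<in>set_pmf (A k r). pmf (A k r) k' * pmf (fst k') y) / pmf (pbar A k r) y"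
    unfolding wB_def by (simp add: sum_distrib_left sum_divide_distrib mult.assoc)
  also have "\<dots> = pmf (gam cost A k r) (x,y) / pmf (fst k) x"
    using gam_zero[of y x] by (cases "pmf (pbar A k r) y = 0") (auto simp: pmf_pbar[symmetric])
  finally show ?thesis .
qed

lemma wB_sum2: "(\<Sum>x\<in>set_pmf (fst k). pmf (fst k) x * wB cost A x k r (y,k')) = pmf (A k r) k' * pmf (fst k') y"
proof -
  have "(\<Sum>x\<in>set_pmf (fst k). pmf (fst k) x * wB cost A x k r (y,k')) =
     (\<Sum>x\<in>set_pmf (fst k). pmf (gam cost A k r) (x,y)) * (pmf (A k r) k' * pmf (fst k') y) / pmf (pbar A k r) y"
    unfolding wB_def sum_distrib_right sum_divide_distrib
    by (intro sum.cong refl) (auto simp: set_pmf_iff)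
  also have "\<dots> = pmf (A k r) k' * pmf (fst k') y"
    using term_zero[of y k'] by (cases "pmf (pbar A k r) y = 0") (auto simp: gam_m2)
  finally show ?thesis .
qed

lemma wB_supp: "wB cost A x k r z \<noteq> 0 \<Longrightarrow> z \<in> set_pmf (pbar A k r) \<times> set_pmf (A k r)"
  unfolding wB_def by (cases z) (auto simp: set_pmf_iff)

lemma fT: "finite (set_pmf (pbar A k r) \<times> set_pmf (A k r))"
  using fpb fP by simp

lemma wB_total: "x \<in> set_pmf (fst k) \<Longrightarrow> (\<Sum>z\<in>set_pmf (pbar A k r) \<times> set_pmf (A k r). wB cost A x k r z) = 1"
proof -
  assume x: "x \<in> set_pmf (fst k)"
  have "(\<Sum>z\<in>set_pmf (pbar A k r) \<times> set_pmf (A k r). wB cost A x k r z)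
     = (\<Sum>y\<in>set_pmf (pbar A k r). \<Sum>k'\<in>set_pmf (A k r). wB cost A x k r (y,k'))"
    by (simp add: sum.cartesian_product)
  also have "\<dots> = (\<Sum>y\<in>set_pmf (pbar A k r). pmf (gam cost A k r) (x,y)) / pmf (fst k) x"
    using x by (simp add: wB_sum1 sum_divide_distrib)
  also have "\<dots> = 1" using x by (simp add: gam_m1 set_pmf_iff)
  finally show ?thesis .
qed

lemma pmf_Bc: "x \<in> set_pmf (fst k) \<Longrightarrow> pmf (Bc cost A x k r) = wB cost A x k r"
proof -
  assume x: "x \<in> set_pmf (fst k)"
  have prob: "(\<integral>\<^sup>+z. ennreal (wB cost A x k r z) \<partial>count_space UNIV) = 1"
    using fT wB_supp wB_nonneg wB_total[OF x]
    by (subst nn_integral_count_space'[of "set_pmf (pbar A k r) \<times> set_pmf (A k r)"]) auto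
  show ?thesis unfolding Bc_def using good x pmf_embed_pmf[OF wB_nonneg prob] by auto
qed

lemma set_Bc: "x \<in> set_pmf (fst k) \<Longrightarrow> set_pmf (Bc cost A x k r) \<subseteq> set_pmf (pbar A k r) \<times> set_pmf (A k r)"
  using pmf_Bc wB_supp by (auto simp: set_pmf_iff)

end

lemma fin_Bc: "finite (set_pmf (Bc cost A x k r))"
proof (cases "goodk A k r \<and> x \<in> set_pmf (fst k)")
  case True then show ?thesis using set_Bc fT by (meson finite_subset)
next
  case False then show ?thesis unfolding Bc_def if_not_P[OF False] by simp
qed



lemma E_map_add: "finite (set_pmf q) \<Longrightarrow>
  measure_pmf.expectation (map_pmf (\<lambda>c. a + c) q) (\<lambda>c. c) = a + measure_pmf.expectation q (\<lambda>c::real. c)"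
  by (simp add: integrable_measure_pmf_finite)

lemma fin_behav: "behavioral_alg B \<Longrightarrow> finite (set_pmf (behav_cost_dist cost B x m rs))"
  by (induction rs arbitrary: x m) (auto simp: behavioral_alg_def set_bind_pmf)

lemma reach_fin: "k \<in> reachable_mixed A s0 m0 \<Longrightarrow> mixed_alg A s0 m0 \<Longrightarrow> finite (set_pmf (fst k))"
  by (induction rule: reachable_mixed.induct) (auto simp: mixed_alg_def)

lemma reach_good: "k \<in> reachable_mixed A s0 m0 \<Longrightarrow> mixed_alg A s0 m0 \<Longrightarrow> goodk A k r"
  using reach_fin[of k A s0 m0] unfolding goodk_def mixed_alg_def by blast

lemma fin_mixed: "k \<in> reachable_mixed A s0 m0 \<Longrightarrow> mixed_alg A s0 m0 \<Longrightarrow> finite (set_pmf (mixed_cost_dist cost A k rs))"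
proof (induction rs arbitrary: k)
  case Nil then show ?case by simp
next
  case (Cons r rs)
  have "finite (set_pmf (A k r))" using Cons.prems unfolding mixed_alg_def by blast
  moreover have "\<And>k'. k' \<in> set_pmf (A k r) \<Longrightarrow> k' \<in> reachable_mixed A s0 m0"
    by (rule reachable_mixed.step[OF Cons.prems(1)])
  ultimately show ?case using Cons by (auto simp: set_bind_pmf)
qed

lemma behav_rec:
  assumes "behavioral_alg B" "finite T" "set_pmf (B x m r) \<subseteq> T"
  shows "measure_pmf.expectation (behav_cost_dist cost B x m (r # rs)) (\<lambda>c. c) =
    (\<Sum>z\<in>T. pmf (B x m r) z * (cost x r (fst z) + measure_pmf.expectation (behav_cost_dist cost B (fst z) (snd z) rs) (\<lambda>c. c)))"
proof -
  have "measure_pmf.expectation (behav_cost_dist cost B x m (r # rs)) (\<lambda>c. c) =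
     (\<Sum>z\<in>T. pmf (B x m r) z *\<^sub>R measure_pmf.expectation ((\<lambda>(y, m'). map_pmf (\<lambda>c. cost x r y + c)
                                        (behav_cost_dist cost B y m' rs)) z) (\<lambda>c. c))"
    using assms by (simp only: behav_cost_dist.simps, intro pmf_expectation_bind)
      (auto simp: fin_behav case_prod_beta)
  also have "\<dots> = (\<Sum>z\<in>T. pmf (B x m r) z * (cost x r (fst z) + measure_pmf.expectation (behav_cost_dist cost B (fst z) (snd z) rs) (\<lambda>c. c)))"
    using fin_behav[OF assms(1)] by (intro sum.cong refl) (simp only: case_prod_beta E_map_add fin_behav[OF assms(1)] real_scaleR_def)
  finally show ?thesis .
qed

lemma mixed_rec:
  assumes "finite (set_pmf (A k r))" "\<And>k'. k' \<in> set_pmf (A k r) \<Longrightarrow> finite (set_pmf (mixed_cost_dist cost A k' rs))"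
  shows "measure_pmf.expectation (mixed_cost_dist cost A k (r # rs)) (\<lambda>c. c) =
    (\<Sum>k'\<in>set_pmf (A k r). pmf (A k r) k' * (mixed_step_cost cost A k r + measure_pmf.expectation (mixed_cost_dist cost A k' rs) (\<lambda>c. c)))"
proof -
  have "measure_pmf.expectation (mixed_cost_dist cost A k (r # rs)) (\<lambda>c. c) =
     (\<Sum>k'\<in>set_pmf (A k r). pmf (A k r) k' *\<^sub>R measure_pmf.expectation (map_pmf (\<lambda>c. mixed_step_cost cost A k r + c)
                                   (mixed_cost_dist cost A k' rs)) (\<lambda>c. c))"
    using assms by (simp only: mixed_cost_dist.simps, intro pmf_expectation_bind) auto
  also have "\<dots> = (\<Sum>k'\<in>set_pmf (A k r). pmf (A k r) k' * (mixed_step_cost cost A k r + measure_pmf.expectation (mixed_cost_dist cost A k' rs) (\<lambda>c. c)))"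
    using assms(2) by (intro sum.cong refl) (simp only: E_map_add real_scaleR_def)
  finally show ?thesis .
qed

lemma sum_prod_split: "(\<Sum>z\<in>A \<times> B. h z) = (\<Sum>y\<in>A. \<Sum>k\<in>B. h (y,k))"
  by (simp add: sum.cartesian_product)

lemma main_ind:
  assumes ma: "mixed_alg A s0 m0"
  shows "k \<in> reachable_mixed A s0 m0 \<Longrightarrow>
    (\<Sum>x\<in>set_pmf (fst k). pmf (fst k) x * measure_pmf.expectation (behav_cost_dist cost (Bc cost A) x k rs) (\<lambda>c. c))
     = measure_pmf.expectation (mixed_cost_dist cost A k rs) (\<lambda>c. c)"
proof (induction rs arbitrary: k)
  case Nil then show ?case by simp
next
  case (Cons r rs)
  let ?Eb = "\<lambda>x k. measure_pmf.expectation (behav_cost_dist cost (Bc cost A) x k rs) (\<lambda>c. c)"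
  let ?Em = "\<lambda>k. measure_pmf.expectation (mixed_cost_dist cost A k rs) (\<lambda>c. c)"
  define \<pi> where "\<pi> = fst k"
  define P where "P = A k r"
  define pb where "pb = pbar A k r"
  define g where "g = gam cost A k r"
  define w where "w = (\<lambda>x. wB cost A x k r)"
  define T where "T = set_pmf pb \<times> set_pmf P"
  have good: "goodk A k r" using reach_good[OF Cons.prems ma] .
  have bA: "behavioral_alg (Bc cost A)" unfolding behavioral_alg_def by (intro allI fin_Bc)
  have reach': "\<And>k'. k' \<in> set_pmf P \<Longrightarrow> k' \<in> reachable_mixed A s0 m0"
    unfolding P_def by (rule reachable_mixed.step[OF Cons.prems])
  have h1: "measure_pmf.expectation (behav_cost_dist cost (Bc cost A) x k (r # rs)) (\<lambda>c. c)
      = (\<Sum>z\<in>T. w x z * (cost x r (fst z) + ?Eb (fst z) (snd z)))" if x: "x \<in> set_pmf \<pi>" for x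
    using behav_rec[OF bA fT[OF good] set_Bc[OF good x[unfolded \<pi>_def]], of cost rs]
    unfolding pmf_Bc[OF good x[unfolded \<pi>_def]] T_def pb_def P_def w_def .
  have "(\<Sum>x\<in>set_pmf \<pi>. pmf \<pi> x * measure_pmf.expectation (behav_cost_dist cost (Bc cost A) x k (r # rs)) (\<lambda>c. c))
     = (\<Sum>x\<in>set_pmf \<pi>. pmf \<pi> x * (\<Sum>z\<in>T. w x z * (cost x r (fst z) + ?Eb (fst z) (snd z))))"
    using h1 by (intro sum.cong refl) (simp del: behav_cost_dist.simps)
  also have "\<dots> = (\<Sum>x\<in>set_pmf \<pi>. \<Sum>z\<in>T. pmf \<pi> x * w x z * cost x r (fst z))
                 + (\<Sum>x\<in>set_pmf \<pi>. \<Sum>z\<in>T. pmf \<pi> x * w x z * ?Eb (fst z) (snd z))"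
    by (simp add: sum_distrib_left sum.distrib[symmetric] algebra_simps)
  also have "(\<Sum>x\<in>set_pmf \<pi>. \<Sum>z\<in>T. pmf \<pi> x * w x z * cost x r (fst z)) = mixed_step_cost cost A k r"
  proof -
    have "(\<Sum>x\<in>set_pmf \<pi>. \<Sum>z\<in>T. pmf \<pi> x * w x z * cost x r (fst z))
        = (\<Sum>x\<in>set_pmf \<pi>. \<Sum>y\<in>set_pmf pb. pmf \<pi> x * cost x r y * (\<Sum>k'\<in>set_pmf P. w x (y,k')))"
      unfolding T_def sum_prod_split by (simp add: sum_distrib_left algebra_simps)
    also have "\<dots> = (\<Sum>x\<in>set_pmf \<pi>. \<Sum>y\<in>set_pmf pb. pmf g (x,y) * cost x r y)"
      unfolding w_def P_def pb_def g_def
      by (intro sum.cong refl) (simp add: wB_sum1[OF good] \<pi>_def set_pmf_iff)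
    also have "\<dots> = (\<Sum>(x,y)\<in>set_pmf \<pi> \<times> set_pmf pb. pmf g (x,y) * cost x r y)"
      by (simp add: sum.cartesian_product)
    also have "\<dots> = transport_cost cost \<pi> r pb"
      using gam_prop[OF good] unfolding \<pi>_def pb_def g_def by blast
    finally show ?thesis unfolding mixed_step_cost_def \<pi>_def pb_def pbar_def .
  qed
  also have "(\<Sum>x\<in>set_pmf \<pi>. \<Sum>z\<in>T. pmf \<pi> x * w x z * ?Eb (fst z) (snd z))
      = (\<Sum>k'\<in>set_pmf P. pmf P k' * ?Em k')"
  proof -
    have "(\<Sum>x\<in>set_pmf \<pi>. \<Sum>z\<in>T. pmf \<pi> x * w x z * ?Eb (fst z) (snd z))
        = (\<Sum>z\<in>T. ?Eb (fst z) (snd z) * (\<Sum>x\<in>set_pmf \<pi>. pmf \<pi> x * w x z))"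
      by (subst sum.swap) (simp add: sum_distrib_right algebra_simps)
    also have "\<dots> = (\<Sum>z\<in>T. ?Eb (fst z) (snd z) * (pmf P (snd z) * pmf (fst (snd z)) (fst z)))"
    proof -
      have e: "(\<Sum>x\<in>set_pmf \<pi>. pmf \<pi> x * w x z) = pmf P (snd z) * pmf (fst (snd z)) (fst z)" for z
        using wB_sum2[OF good, of cost "fst z" "snd z"] unfolding w_def P_def \<pi>_def by simp
      show ?thesis by (simp only: e)
    qed
    also have "\<dots> = (\<Sum>k'\<in>set_pmf P. pmf P k' * (\<Sum>y\<in>set_pmf pb. pmf (fst k') y * ?Eb y k'))"
      unfolding T_def sum_prod_split by (subst sum.swap) (simp add: sum_distrib_left algebra_simps)
    also have "\<dots> = (\<Sum>k'\<in>set_pmf P. pmf P k' * (\<Sum>y\<in>set_pmf (fst k'). pmf (fst k') y * ?Eb y k'))"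
    proof -
      have eq: "(\<Sum>y\<in>set_pmf pb. pmf (fst k') y * ?Eb y k') = (\<Sum>y\<in>set_pmf (fst k'). pmf (fst k') y * ?Eb y k')"
        if k': "k' \<in> set_pmf P" for k'
        using k' fpb[OF good] set_pbar[OF good]
        by (intro sum.mono_neutral_right) (auto simp: pb_def P_def set_pmf_iff)
      show ?thesis by (rule sum.cong[OF refl]) (simp only: eq)
    qed
    also have "\<dots> = (\<Sum>k'\<in>set_pmf P. pmf P k' * ?Em k')"
      using Cons.IH reach' by (intro sum.cong refl) auto
    finally show ?thesis .
  qed
  also have "mixed_step_cost cost A k r + (\<Sum>k'\<in>set_pmf P. pmf P k' * ?Em k')
      = measure_pmf.expectation (mixed_cost_dist cost A k (r # rs)) (\<lambda>c. c)"
  proof -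
    have fP: "finite (set_pmf P)" using fP[OF good] by (simp add: P_def)
    have "measure_pmf.expectation (mixed_cost_dist cost A k (r # rs)) (\<lambda>c. c)
       = (\<Sum>k'\<in>set_pmf P. pmf P k' * (mixed_step_cost cost A k r + ?Em k'))"
      unfolding P_def
      by (rule mixed_rec) (use fP fin_mixed[OF _ ma] reach' in \<open>auto simp: P_def\<close>)
    also have "\<dots> = mixed_step_cost cost A k r * (\<Sum>k'\<in>set_pmf P. pmf P k') + (\<Sum>k'\<in>set_pmf P. pmf P k' * ?Em k')"
      by (simp add: sum_distrib_left sum_distrib_right sum.distrib algebra_simps)
    also have "\<dots> = mixed_step_cost cost A k r + (\<Sum>k'\<in>set_pmf P. pmf P k' * ?Em k')"
      using sum_pmf_eq_1[OF fP] by simp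
    finally show ?thesis by simp
  qed
  finally show ?case unfolding \<pi>_def .
qed


theorem mainTheorem1:
  fixes d :: "'x \<Rightarrow> 'x \<Rightarrow> real"
    and cost :: "'x \<Rightarrow> 'r \<Rightarrow> 'x \<Rightarrow> real"
    and s0 :: 'x
    and A :: "('x, 'm) full_state \<Rightarrow> 'r \<Rightarrow> ('x, 'm) full_state pmf"
    and m0 :: 'm
  assumes "online_problem d cost"
    and "mixed_alg A s0 m0"
  shows "\<exists>(B :: 'x \<Rightarrow> ('x, 'm) full_state \<Rightarrow> 'r \<Rightarrow> ('x \<times> ('x, 'm) full_state) pmf) m0'.
           behavioral_alg B \<and>
           (\<forall>\<rho>. measure_pmf.expectation (behav_cost_dist cost B s0 m0' \<rho>) (\<lambda>c. c)
                = measure_pmf.expectation (mixed_cost_dist cost A (return_pmf s0, m0) \<rho>) (\<lambda>c. c))"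
proof -
  have bA: "behavioral_alg (Bc cost A)"
    unfolding behavioral_alg_def by (intro allI fin_Bc)
  have k0: "(return_pmf s0, m0) \<in> reachable_mixed A s0 m0" by (rule reachable_mixed.start)
  show ?thesis
  proof (intro exI[of _ "Bc cost A"] exI[of _ "(return_pmf s0, m0)"] conjI allI)
    show "behavioral_alg (Bc cost A)" by (rule bA)
  next
    fix \<rho>
    show "measure_pmf.expectation (behav_cost_dist cost (Bc cost A) s0 (return_pmf s0, m0) \<rho>) (\<lambda>c. c)
                = measure_pmf.expectation (mixed_cost_dist cost A (return_pmf s0, m0) \<rho>) (\<lambda>c. c)"
      using main_ind[OF assms(2) k0, of cost \<rho>] by simp
  qed
qed

end
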